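(* Let $\overline G$ be the survival function of a nonnegative random variable and consider a Kijima type I repair model: $(A_k)_{k\ge1}$ are nonnegative random variables (degrees of repair), $(X_k)_{k\ge1}$ are nonnegative interarrival times, the virtual ages are $V_0=0$, $V_k=V_{k-1}+A_kX_k$ (so $V_k=A_1X_1+\dots+A_kX_k$), and conditionally on $(A_1,A_2,\dots)=(a_1,a_2,\dots)$, $X_1$ has survival function $\overline G$ and for each $k\ge1$ the conditional survival function of $X_{k+1}$ given $(X_1,\dots,X_k)=(x_1,\dots,x_k)$ is $z\mapsto\overline G(z\mid a_1x_1+\dots+a_kx_k)$; in particular $A_{k+1}$ is independent of $(X_1,\dots,X_k)$ for each $k$. Let $N(t)=\max\{k:X_1+\dots+X_k\le t\}$ be the associated counting process and let $T$ be a nonnegative random variable independent of $\{(X_k,A_k)\}_{k\ge1}$. If $T$ is DFR and $X_1$ (i.e. $\overline G$) is IFR, then $N(T)$ is discrete DFR.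
   Context: For $v\ge0$, $\overline G(z\mid v)=\overline G(v+z)/\overline G(v)$ if $\overline G(v)>0$ and $\overline G(z\mid v)=0$ if $\overline G(v)=0$ ($z\ge0$). A survival function $\overline G$ is DFR (resp. IFR) if for every $z\ge0$ the map $t\mapsto\overline G(z+t)/\overline G(t)$ is increasing (resp. decreasing) on $\{t:\overline G(t)>0\}$. A random variable $N$ with values in $\{0,1,2,\dots\}$ is discrete DFR if $P(N\ge n+1)^2\le P(N\ge n)P(N\ge n+2)$ for all $n=0,1,2,\dots$. *)

theory Defs
  imports "HOL-Probability.Probability"
begin

definition cond_surv :: "(real \<Rightarrow> real) \<Rightarrow> real \<Rightarrow> real \<Rightarrow> real" where
  "cond_surv G v z = (if G v > 0 then G (v + z) / G v else 0)"

definition IFR :: "(real \<Rightarrow> real) \<Rightarrow> bool" where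
  "IFR G \<longleftrightarrow> (\<forall>z\<ge>0. \<forall>s t. 0 \<le> s \<longrightarrow> s \<le> t \<longrightarrow> G s > 0 \<longrightarrow> G t > 0 \<longrightarrow>
      G (z + t) / G t \<le> G (z + s) / G s)"

definition DFR :: "(real \<Rightarrow> real) \<Rightarrow> bool" where
  "DFR G \<longleftrightarrow> (\<forall>z\<ge>0. \<forall>s t. 0 \<le> s \<longrightarrow> s \<le> t \<longrightarrow> G s > 0 \<longrightarrow> G t > 0 \<longrightarrow>
      G (z + s) / G s \<le> G (z + t) / G t)"

definition surv :: "'a measure \<Rightarrow> ('a \<Rightarrow> real) \<Rightarrow> real \<Rightarrow> real" where
  "surv M Y t = measure M {\<omega> \<in> space M. Y \<omega> > t}"

definition vage :: "(nat \<Rightarrow> 'a \<Rightarrow> real) \<Rightarrow> (nat \<Rightarrow> 'a \<Rightarrow> real) \<Rightarrow> nat \<Rightarrow> 'a \<Rightarrow> real" where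
  "vage A X k \<omega> = (\<Sum>j\<in>{1..k}. A j \<omega> * X j \<omega>)"

text \<open>Counting process N(t) = max {k. X_1 + ... + X_k <= t}, taken as a supremum in
  the extended naturals (it equals the maximum whenever that exists).\<close>
definition Ncount :: "(nat \<Rightarrow> 'a \<Rightarrow> real) \<Rightarrow> real \<Rightarrow> 'a \<Rightarrow> enat" where
  "Ncount X t \<omega> = Sup {enat k | k. (\<Sum>j\<in>{1..k}. X j \<omega>) \<le> t}"

definition discrete_DFR :: "'a measure \<Rightarrow> ('a \<Rightarrow> enat) \<Rightarrow> bool" where
  "discrete_DFR M N \<longleftrightarrow> (\<forall>n::nat.
     (measure M {\<omega> \<in> space M. N \<omega> \<ge> enat (n + 1)})\<^sup>2 \<le>
     measure M {\<omega> \<in> space M. N \<omega> \<ge> enat n} * measure M {\<omega> \<in> space M. N \<omega> \<ge> enat (n + 2)})"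

end

theory Submission
  imports Defs
begin


locale kij = prob_space M
  for M :: "'a measure" +
  fixes A X :: "nat \<Rightarrow> 'a \<Rightarrow> real" and T :: "'a \<Rightarrow> real" and G :: "real \<Rightarrow> real"
    and \<mu> :: "real measure"
  assumes mu_prob: "prob_space \<mu>" and mu_sets: "sets \<mu> = sets borel"
    and G_def: "\<And>t. G t = measure \<mu> {t<..}"
    and A_meas: "\<And>k. 1 \<le> k \<Longrightarrow> A k \<in> borel_measurable M"
    and X_meas: "\<And>k. 1 \<le> k \<Longrightarrow> X k \<in> borel_measurable M"
    and A_nonneg: "\<And>k \<omega>. 1 \<le> k \<Longrightarrow> \<omega> \<in> space M \<Longrightarrow> 0 \<le> A k \<omega>"
    and X_nonneg: "\<And>k \<omega>. 1 \<le> k \<Longrightarrow> \<omega> \<in> space M \<Longrightarrow> 0 \<le> X k \<omega>"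
    and kijima: "\<And>k z B. 0 \<le> z \<Longrightarrow>
        B \<in> sets (PiM UNIV (\<lambda>_. borel :: (real \<times> real) measure)) \<Longrightarrow>
        measure M ({\<omega> \<in> space M.
              (\<lambda>j. (if 1 \<le> j then A j \<omega> else 0, if j \<in> {1..k} then X j \<omega> else 0)) \<in> B}
            \<inter> {\<omega> \<in> space M. X (Suc k) \<omega> > z})
        = (\<integral>\<omega>\<in>{\<omega> \<in> space M.
              (\<lambda>j. (if 1 \<le> j then A j \<omega> else 0, if j \<in> {1..k} then X j \<omega> else 0)) \<in> B}.
              cond_surv G (vage A X k \<omega>) z \<partial>M)"
    and T_meas: "T \<in> borel_measurable M"
    and T_nonneg: "\<And>\<omega>. \<omega> \<in> space M \<Longrightarrow> 0 \<le> T \<omega>"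
    and T_indep: "prob_space.indep_set M
                    {T -` S \<inter> space M | S. S \<in> sets (borel :: real measure)}
                    {(\<lambda>\<omega> k. (if 1 \<le> k then X k \<omega> else 0, if 1 \<le> k then A k \<omega> else 0)) -` S \<inter> space M
                       | S. S \<in> sets (PiM UNIV (\<lambda>_. borel :: (real \<times> real) measure))}"
    and T_DFR: "DFR (surv M T)"
    and G_IFR: "IFR G"
begin

lemma mu_space[simp]: "space \<mu> = UNIV"
  using sets_eq_imp_space_eq[OF mu_sets] by simp

lemma mu_sets_Ioi[simp]: "{t<..} \<in> sets \<mu>"
  using mu_sets by simp

lemma G_nonneg: "0 \<le> G t" by (simp add: G_def)
lemma G_le1: "G t \<le> 1"
  using prob_space.prob_le_1[OF mu_prob] by (simp add: G_def)
lemma G_emeasure: "emeasure \<mu> {t<..} = ennreal (G t)"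
  using finite_measure.emeasure_eq_measure[OF prob_space.axioms(1)[OF mu_prob]] by (simp add: G_def)
lemma G_antimono: "s \<le> t \<Longrightarrow> G t \<le> G s"
  unfolding G_def
  by (intro finite_measure.finite_measure_mono[OF prob_space.axioms(1)[OF mu_prob]]) auto

lemma G_meas[measurable]: "G \<in> borel_measurable borel"
proof -
  have "mono (\<lambda>t. G (- t))" unfolding mono_def using G_antimono by simp
  then have "(\<lambda>t. G (- t)) \<in> borel_measurable borel" by (rule borel_measurable_mono)
  then have "(\<lambda>t. G (- (- t))) \<in> borel_measurable borel" by measurable
  then show ?thesis by simp
qed

definition kern :: "real \<Rightarrow> real measure" where
  "kern v = (if G v > 0 then distr (uniform_measure \<mu> {v<..}) borel (\<lambda>y. y - v) else return borel 0)"

definition ksurv :: "real \<Rightarrow> real \<Rightarrow> real" where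
  "ksurv v z = (if z < 0 then 1 else cond_surv G v z)"

lemma meas_unif[simp]: "measurable (uniform_measure \<mu> S) N = measurable borel N"
  by (rule measurable_cong_sets) (simp_all add: mu_sets)

lemma kern_space[simp]: "space (kern v) = UNIV" and kern_sets[simp]: "sets (kern v) = sets borel"
  by (auto simp: kern_def)

lemma kern_prob: "prob_space (kern v)"
proof (cases "G v > 0")
  case True
  have "prob_space (uniform_measure \<mu> {v<..})"
    using True G_emeasure[of v] by (intro prob_space_uniform_measure) auto
  then have "prob_space (distr (uniform_measure \<mu> {v<..}) borel (\<lambda>y. y - v))"
    by (rule prob_space.prob_space_distr) simp
  then show ?thesis using True by (simp add: kern_def)
next
  case False then show ?thesis by (simp add: kern_def prob_space_return)
qed

lemma kern_Ioi: "emeasure (kern v) {z<..} = ennreal (ksurv v z)"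
proof (cases "G v > 0")
  case True
  have m: "(\<lambda>y. y - v) \<in> measurable (uniform_measure \<mu> {v<..}) borel"
    by simp
  have "emeasure (kern v) {z<..} = emeasure (uniform_measure \<mu> {v<..}) ((\<lambda>y. y - v) -` {z<..})"
    using True m by (simp add: kern_def emeasure_distr)
  also have "\<dots> = emeasure \<mu> ({v<..} \<inter> (\<lambda>y. y - v) -` {z<..}) / emeasure \<mu> {v<..}"
  proof (rule emeasure_uniform_measure)
    have "(\<lambda>y. y - v) -` {z<..} = {z+v<..}" by auto
    then show "(\<lambda>y. y - v) -` {z<..} \<in> sets \<mu>" by (simp add: mu_sets)
  qed (simp add: mu_sets)
  also have "{v<..} \<inter> (\<lambda>y. y - v) -` {z<..} = {max v (v + z)<..}"
    by (auto simp: max_def)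
  also have "emeasure \<mu> {max v (v + z)<..} / emeasure \<mu> {v<..} = ennreal (ksurv v z)"
  proof (cases "z < 0")
    case True
    then have "max v (v + z) = v" by simp
    then show ?thesis using \<open>G v > 0\<close> True
      by (simp add: G_emeasure ksurv_def divide_ennreal G_nonneg)
  next
    case False
    then have "max v (v + z) = v + z" by simp
    then show ?thesis using \<open>G v > 0\<close> False
      by (simp add: G_emeasure divide_ennreal G_nonneg ksurv_def cond_surv_def)
  qed
  finally show ?thesis .
next
  case False then show ?thesis
    by (auto simp: kern_def ksurv_def cond_surv_def)
qed

end


context kij begin

lemma ksurv_meas[measurable]: "(\<lambda>v. ksurv v z) \<in> borel_measurable borel"
  unfolding ksurv_def cond_surv_def by measurable

lemma ksurv_nonneg: "0 \<le> ksurv v z"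
  by (simp add: ksurv_def cond_surv_def G_nonneg)

lemma ksurv_le1: "ksurv v z \<le> 1"
proof -
  have "G (v + z) \<le> G v" if "0 \<le> z" using G_antimono that by simp
  then show ?thesis by (auto simp: ksurv_def cond_surv_def divide_le_eq_1)
qed

lemma sets_borel_Ioi: "sets (borel::real measure) = sigma_sets UNIV (range greaterThan)"
  by (subst borel_Ioi) (simp add: sets_measure_of)

lemma kern_meas_prob[measurable]: "kern \<in> borel \<rightarrow>\<^sub>M prob_algebra borel"
proof (rule measurable_prob_algebra_generated[OF sets_borel_Ioi])
  show "Int_stable (range greaterThan :: real set set)"
  proof (clarsimp simp: Int_stable_def)
    fix a b :: real
    have "{a<..} \<inter> {b<..} = {max a b<..}" by auto
    then show "{a<..} \<inter> {b<..} \<in> range greaterThan" by blast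
  qed
  fix S :: "real set" assume "S \<in> range greaterThan"
  then obtain z where z: "S = {z<..}" by auto
  show "(\<lambda>a. emeasure (kern a) S) \<in> borel_measurable borel"
    unfolding z kern_Ioi by measurable
qed (auto simp: kern_prob)

lemma kern_meas[measurable]: "kern \<in> borel \<rightarrow>\<^sub>M subprob_algebra borel"
  by (rule measurable_prob_algebraD) simp

lemma kern_AE_nonneg: "AE x in kern v. 0 \<le> x"
proof (cases "G v > 0")
  case True
  have "AE y in uniform_measure \<mu> {v<..}. 0 \<le> y - v"
    by (rule AE_uniform_measureI) (auto simp: mu_sets)
  then have "AE x in distr (uniform_measure \<mu> {v<..}) borel (\<lambda>y. y - v). 0 \<le> x"
    by (subst AE_distr_iff) auto
  moreover have "kern v = distr (uniform_measure \<mu> {v<..}) borel (\<lambda>y. y - v)"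
    using True by (simp add: kern_def)
  ultimately show ?thesis by metis
next
  case False
  then have "kern v = return borel 0" by (simp add: kern_def)
  moreover have "AE x in return borel (0::real). 0 \<le> x" by (subst AE_return) auto
  ultimately show ?thesis by metis
qed

lemma kern_measure_Ioi: "measure (kern v) {z<..} = ksurv v z"
  using kern_Ioi[of v z] ksurv_nonneg by (simp add: measure_def)

lemma kern_measure_atMost: "measure (kern v) {..c} = 1 - ksurv v c"
proof -
  interpret K: prob_space "kern v" by (rule kern_prob)
  have "{..c} = space (kern v) - {c<..}" by auto
  then have "measure (kern v) {..c} = 1 - measure (kern v) {c<..}"
    using K.prob_compl[of "{c<..}"] by simp
  then show ?thesis by (simp add: kern_measure_Ioi)
qed

end


context kij begin

lemma ksurv_anti: "0 \<le> v \<Longrightarrow> v \<le> w \<Longrightarrow> ksurv w c \<le> ksurv v c"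
proof -
  assume v: "0 \<le> v" "v \<le> w"
  show ?thesis
  proof (cases "c < 0")
    case True then show ?thesis by (simp add: ksurv_def)
  next
    case False
    show ?thesis
    proof (cases "G w > 0")
      case False then show ?thesis using \<open>\<not> c < 0\<close> ksurv_nonneg[of v c]
        by (simp add: ksurv_def cond_surv_def)
    next
      case True
      then have Gv: "G v > 0" using G_antimono[OF v(2)] by simp
      have "G (c + w) / G w \<le> G (c + v) / G v"
        using G_IFR v True Gv \<open>\<not> c < 0\<close> unfolding IFR_def by auto
      then show ?thesis using True Gv \<open>\<not> c < 0\<close> by (simp add: ksurv_def cond_surv_def add.commute)
    qed
  qed
qed

definition F :: "real \<Rightarrow> real" where "F s = measure M {\<omega> \<in> space M. s \<le> T \<omega>}"
abbreviation Tb :: "real \<Rightarrow> real" where "Tb \<equiv> surv M T"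

lemma T_sets[measurable]: "T \<in> borel_measurable M" by (rule T_meas)

lemma F_nonneg: "0 \<le> F s" by (simp add: F_def)
lemma F_le1: "F s \<le> 1" by (simp add: F_def)
lemma F_antimono: "s \<le> t \<Longrightarrow> F t \<le> F s"
  unfolding F_def by (intro finite_measure_mono) auto
lemma F_le0: "s \<le> 0 \<Longrightarrow> F s = 1"
proof -
  assume "s \<le> 0"
  then have "{\<omega> \<in> space M. s \<le> T \<omega>} = space M" using T_nonneg by force
  then show ?thesis by (simp add: F_def prob_space)
qed
lemma F_meas[measurable]: "F \<in> borel_measurable borel"
proof -
  have "mono (\<lambda>t. F (- t))" unfolding mono_def using F_antimono by simp
  then have "(\<lambda>t. F (- t)) \<in> borel_measurable borel" by (rule borel_measurable_mono)
  then have "(\<lambda>t. F (- (- t))) \<in> borel_measurable borel" by measurable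
  then show ?thesis by simp
qed

lemma Tb_ge_F: "u < s \<Longrightarrow> F s \<le> Tb u"
  unfolding F_def surv_def by (intro finite_measure_mono) auto
lemma Tb_nonneg: "0 \<le> Tb u" by (simp add: surv_def)
lemma Tb_le1: "Tb u \<le> 1" by (simp add: surv_def)

lemma Tb_lim: assumes c: "0 < c" shows "(\<lambda>m. Tb (s - c / real (Suc m))) \<longlonglongrightarrow> F s"
proof -
  define B where "B m = {\<omega> \<in> space M. s - c / real (Suc m) < T \<omega>}" for m
  have dec: "decseq B"
  proof (rule decseq_SucI)
    fix m
    have "c / real (Suc (Suc m)) \<le> c / real (Suc m)"
      using c by (intro divide_left_mono) auto
    then show "B (Suc m) \<subseteq> B m" unfolding B_def by auto
  qed
  have rng: "range B \<subseteq> sets M" unfolding B_def by auto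
  have int: "(\<Inter>m. B m) = {\<omega> \<in> space M. s \<le> T \<omega>}"
  proof safe
    fix \<omega> assume w: "\<omega> \<in> (\<Inter>m. B m)"
    then show "\<omega> \<in> space M" unfolding B_def by auto
    show "s \<le> T \<omega>"
    proof (rule ccontr)
      assume "\<not> s \<le> T \<omega>"
      then have d: "0 < (s - T \<omega>) / c" using c by simp
      obtain n :: nat where n: "n > 0" "inverse (real n) < (s - T \<omega>) / c"
        using ex_inverse_of_nat_less[OF d] by auto
      then obtain m where m: "n = Suc m" by (cases n) auto
      have "c / real (Suc m) < s - T \<omega>"
        using n m c by (simp add: field_simps)
      moreover have "\<omega> \<in> B m" using w by auto
      ultimately show False unfolding B_def by auto
    qed
  next
    fix \<omega> m assume "\<omega> \<in> space M" "s \<le> T \<omega>"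
    moreover have "0 < c / real (Suc m)" using c by simp
    ultimately show "\<omega> \<in> B m" unfolding B_def by auto
  qed
  have "(\<lambda>m. measure M (B m)) \<longlonglongrightarrow> measure M (\<Inter>m. B m)"
    by (rule finite_Lim_measure_decseq[OF rng dec])
  then have "(\<lambda>m. measure M (B m)) \<longlonglongrightarrow> measure M {\<omega> \<in> space M. s \<le> T \<omega>}"
    using int by metis
  then show ?thesis unfolding B_def surv_def F_def by simp
qed

lemma Tb_DFR: "0 \<le> z \<Longrightarrow> 0 \<le> s \<Longrightarrow> s \<le> t \<Longrightarrow> 0 < Tb s \<Longrightarrow> 0 < Tb t \<Longrightarrow>
    Tb (z + s) * Tb t \<le> Tb (z + t) * Tb s"
proof -
  assume a: "0 \<le> z" "0 \<le> s" "s \<le> t" "0 < Tb s" "0 < Tb t"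
  then have "Tb (z + s) / Tb s \<le> Tb (z + t) / Tb t"
    using T_DFR unfolding DFR_def by blast
  then show ?thesis using a by (simp add: field_simps)
qed

end


context kij begin

lemma F_DFR:
  assumes s: "0 \<le> s" and st: "s \<le> t" and x: "0 \<le> x"
  shows "F (s + x) * F t \<le> F (t + x) * F s"
proof (cases "F t > 0")
  case False
  then have "F t = 0" using F_nonneg[of t] by simp
  then show ?thesis using F_nonneg by simp
next
  case Ft: True
  show ?thesis
  proof (cases "s > 0")
    case True
    define u where "u m = s - s / real (Suc m)" for m
    define v where "v m = t - s / real (Suc m)" for m
    have pos: "0 < s / real (Suc m)" for m using True by simp
    have le: "s / real (Suc m) \<le> s" for m using True by (simp add: divide_le_eq)
    have ineq: "Tb (x + u m) * Tb (v m) \<le> Tb (x + v m) * Tb (u m)" for m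
    proof (rule Tb_DFR)
      show "0 \<le> x" by fact
      show "0 \<le> u m" using le[of m] by (simp add: u_def)
      show "u m \<le> v m" using st by (simp add: u_def v_def)
      have "F s \<le> Tb (u m)" using pos[of m] by (intro Tb_ge_F) (simp add: u_def)
      moreover have "F t \<le> F s" using st by (rule F_antimono)
      ultimately show "0 < Tb (u m)" using Ft by simp
      have "F t \<le> Tb (v m)" using pos[of m] by (intro Tb_ge_F) (simp add: v_def)
      then show "0 < Tb (v m)" using Ft by simp
    qed
    have l1: "(\<lambda>m. Tb (x + u m)) \<longlonglongrightarrow> F (s + x)"
      using Tb_lim[OF True, of "s + x"] by (simp add: u_def algebra_simps)
    have l2: "(\<lambda>m. Tb (v m)) \<longlonglongrightarrow> F t"
      using Tb_lim[OF True, of "t"] by (simp add: v_def)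
    have l3: "(\<lambda>m. Tb (x + v m)) \<longlonglongrightarrow> F (t + x)"
      using Tb_lim[OF True, of "t + x"] by (simp add: v_def algebra_simps)
    have l4: "(\<lambda>m. Tb (u m)) \<longlonglongrightarrow> F s"
      using Tb_lim[OF True, of "s"] by (simp add: u_def)
    show ?thesis
      by (rule LIMSEQ_le[OF tendsto_mult[OF l1 l2] tendsto_mult[OF l3 l4]]) (use ineq in auto)
  next
    case False
    then have s0: "s = 0" using s by simp
    show ?thesis
    proof (cases "t > 0 \<and> x > 0")
      case False
      then have "t = 0 \<or> x = 0" using st x s0 by auto
      then show ?thesis using s0 by (auto simp: F_le0)
    next
      case True
      define c where "c = min x t"
      have c: "0 < c" "c \<le> x" "c \<le> t" using True by (auto simp: c_def)
      define u where "u m = x - c / real (Suc m)" for m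
      define v where "v m = t - c / real (Suc m)" for m
      have pos: "0 < c / real (Suc m)" for m using c by simp
      have le: "c / real (Suc m) \<le> c" for m using c by (simp add: divide_le_eq)
      have T0: "0 < Tb 0" using Tb_ge_F[of 0 t] True Ft by simp
      have ineq: "Tb (u m) * Tb (v m) \<le> Tb (u m + v m)" for m
      proof -
        have vm: "0 < Tb (v m)"
          using Tb_ge_F[of "v m" t] pos[of m] Ft by (simp add: v_def)
        have "Tb (u m + 0) * Tb (v m) \<le> Tb (u m + v m) * Tb 0"
          using le[of m] c by (intro Tb_DFR T0 vm) (auto simp: u_def v_def)
        also have "\<dots> \<le> Tb (u m + v m)"
          using Tb_le1[of 0] Tb_nonneg[of "u m + v m"] by (simp add: mult_left_le)
        finally show ?thesis by simp
      qed
      have l1: "(\<lambda>m. Tb (u m)) \<longlonglongrightarrow> F x"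
        using Tb_lim[OF c(1), of x] by (simp add: u_def)
      have l2: "(\<lambda>m. Tb (v m)) \<longlonglongrightarrow> F t"
        using Tb_lim[OF c(1), of t] by (simp add: v_def)
      have l3: "(\<lambda>m. Tb (u m + v m)) \<longlonglongrightarrow> F (t + x)"
      proof -
        have "2 * c > 0" using c by simp
        from Tb_lim[OF this, of "t + x"] show ?thesis by (simp add: u_def v_def algebra_simps add_divide_distrib)
      qed
      have "F x * F t \<le> F (t + x)"
        by (rule LIMSEQ_le[OF tendsto_mult[OF l1 l2] l3]) (use ineq in auto)
      then show ?thesis using s0 by (simp add: F_le0)
    qed
  qed
qed

end


abbreviation HS :: "(nat \<Rightarrow> real \<times> real) measure" where
  "HS \<equiv> PiM UNIV (\<lambda>_. borel :: (real \<times> real) measure)"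

lemma fst_borel[measurable]: "fst \<in> (borel :: (real \<times> real) measure) \<rightarrow>\<^sub>M borel"
  by (subst borel_prod[symmetric]) (rule measurable_fst)
lemma snd_borel[measurable]: "snd \<in> (borel :: (real \<times> real) measure) \<rightarrow>\<^sub>M borel"
  by (subst borel_prod[symmetric]) (rule measurable_snd)
lemma pair_borel: "f \<in> borel_measurable M \<Longrightarrow> g \<in> borel_measurable M \<Longrightarrow>
    (\<lambda>x. (f x, g x)) \<in> M \<rightarrow>\<^sub>M (borel :: (real \<times> real) measure)"
  by (subst borel_prod[symmetric]) (rule measurable_Pair)
lemma comp_fst[measurable]: "(\<lambda>h. fst (h j)) \<in> HS \<rightarrow>\<^sub>M borel"
proof -
  have "(\<lambda>h. h j) \<in> HS \<rightarrow>\<^sub>M (borel :: (real \<times> real) measure)"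
    by (rule measurable_component_singleton) simp
  from measurable_compose[OF this fst_borel] show ?thesis by simp
qed
lemma comp_snd[measurable]: "(\<lambda>h. snd (h j)) \<in> HS \<rightarrow>\<^sub>M borel"
proof -
  have "(\<lambda>h. h j) \<in> HS \<rightarrow>\<^sub>M (borel :: (real \<times> real) measure)"
    by (rule measurable_component_singleton) simp
  from measurable_compose[OF this snd_borel] show ?thesis by simp
qed

definition sH :: "nat \<Rightarrow> (nat \<Rightarrow> real \<times> real) \<Rightarrow> real" where
  "sH k h = (\<Sum>j\<in>{1..k}. snd (h j))"
definition vH :: "nat \<Rightarrow> (nat \<Rightarrow> real \<times> real) \<Rightarrow> real" where
  "vH k h = (\<Sum>j\<in>{1..k}. fst (h j) * snd (h j))"

lemma sH_meas[measurable]: "sH k \<in> HS \<rightarrow>\<^sub>M borel"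
  unfolding sH_def by measurable
lemma vH_meas[measurable]: "vH k \<in> HS \<rightarrow>\<^sub>M borel"
  unfolding vH_def by measurable

lemma hist_meas:
  fixes a x :: "nat \<Rightarrow> 'a \<Rightarrow> real"
  assumes am: "\<And>j. 1 \<le> j \<Longrightarrow> a j \<in> borel_measurable M"
    and xm: "\<And>j. 1 \<le> j \<Longrightarrow> x j \<in> borel_measurable M"
  shows "(\<lambda>\<omega> j. (if 1 \<le> j then a j \<omega> else 0, if j \<in> {1..k} then x j \<omega> else 0))
     \<in> M \<rightarrow>\<^sub>M PiM UNIV (\<lambda>_. borel :: (real \<times> real) measure)"
proof (rule measurable_PiM_single')
  fix j :: nat
  have 1: "(\<lambda>\<omega>. if 1 \<le> j then a j \<omega> else 0) \<in> borel_measurable M"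
    by (cases "1 \<le> j") (simp_all add: am)
  have 2: "(\<lambda>\<omega>. if j \<in> {1..k} then x j \<omega> else 0) \<in> borel_measurable M"
  proof (cases "j \<in> {1..k}")
    case True then show ?thesis using xm[of j] by auto
  next
    case False then show ?thesis by (simp only: False if_False) simp
  qed
  show "(\<lambda>\<omega>. (if 1 \<le> j then a j \<omega> else 0, if j \<in> {1..k} then x j \<omega> else 0)) \<in> borel_measurable M"
    using 1 2 by (rule pair_borel)
qed (intro funcsetI PiE_I; auto)

context kij begin

definition Hk :: "nat \<Rightarrow> 'a \<Rightarrow> nat \<Rightarrow> real \<times> real" where
  "Hk k \<omega> = (\<lambda>j. (if 1 \<le> j then A j \<omega> else 0, if j \<in> {1..k} then X j \<omega> else 0))"

lemma Hk_meas[measurable]: "Hk k \<in> M \<rightarrow>\<^sub>M HS"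
  unfolding Hk_def[abs_def] by (rule hist_meas[OF A_meas X_meas])

definition S :: "nat \<Rightarrow> 'a \<Rightarrow> real" where "S k \<omega> = (\<Sum>j\<in>{1..k}. X j \<omega>)"

lemma S_eq: "S k \<omega> = sH k (Hk k \<omega>)"
  unfolding S_def sH_def Hk_def by (intro sum.cong) auto
lemma vage_eq: "vage A X k \<omega> = vH k (Hk k \<omega>)"
  unfolding vage_def vH_def Hk_def by (intro sum.cong) auto

lemma S_meas[measurable]: "S k \<in> borel_measurable M"
  unfolding S_def[abs_def] by (intro borel_measurable_sum) (auto intro: X_meas)
lemma vage_meas[measurable]: "vage A X k \<in> borel_measurable M"
  unfolding vage_def[abs_def] by (intro borel_measurable_sum borel_measurable_times) (auto intro: X_meas A_meas)

lemma X_meas'[measurable]: "X (Suc k) \<in> borel_measurable M"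
  by (rule X_meas) simp

lemma S_Suc: "S (Suc k) \<omega> = S k \<omega> + X (Suc k) \<omega>"
  unfolding S_def by simp
lemma vage_Suc: "vage A X (Suc k) \<omega> = vage A X k \<omega> + A (Suc k) \<omega> * X (Suc k) \<omega>"
  unfolding vage_def by simp
lemma S_nonneg: "\<omega> \<in> space M \<Longrightarrow> 0 \<le> S k \<omega>"
  unfolding S_def using X_nonneg by (intro sum_nonneg) auto
lemma vage_nonneg: "\<omega> \<in> space M \<Longrightarrow> 0 \<le> vage A X k \<omega>"
  unfolding vage_def using X_nonneg A_nonneg by (intro sum_nonneg mult_nonneg_nonneg) auto
lemma vage_mono: "\<omega> \<in> space M \<Longrightarrow> vage A X k \<omega> \<le> vage A X (Suc k) \<omega>"
  unfolding vage_Suc using X_nonneg[of "Suc k" \<omega>] A_nonneg[of "Suc k" \<omega>] by simp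

lemma cond_surv_meas[measurable]: "(\<lambda>v. cond_surv G v z) \<in> borel_measurable borel"
  unfolding cond_surv_def by measurable

end


lemma space_HS: "space HS = UNIV"
  by (auto simp: space_PiM intro!: PiE_I)

lemma sets_borel_Ioi': "sets (borel::real measure) = sigma_sets UNIV (range greaterThan)"
  by (subst borel_Ioi) (simp add: sets_measure_of)

lemma sets_HSB: "sets (HS \<Otimes>\<^sub>M (borel :: real measure)) =
    sigma_sets (UNIV \<times> UNIV) {B \<times> {z<..} | B (z::real). B \<in> sets HS}"
proof -
  have "sets (HS \<Otimes>\<^sub>M (borel :: real measure)) =
      sets (sigma (space HS \<times> space borel) {a \<times> b | a b. a \<in> sets HS \<and> b \<in> range greaterThan})"
  proof (rule sets_pair_eq)
    show "sets HS \<subseteq> Pow (space HS)" using sets.space_closed by auto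
    show "sets HS = sigma_sets (space HS) (sets HS)" by (simp add: sets.sigma_sets_eq)
    show "countable {space HS}" by simp
    show "{space HS} \<subseteq> sets HS" by simp
    show "\<Union> {space HS} = space HS" by simp
    show "range greaterThan \<subseteq> Pow (space (borel :: real measure))" by simp
    show "sets (borel :: real measure) = sigma_sets (space borel) (range greaterThan)"
      using sets_borel_Ioi' by simp
    show "countable (range (\<lambda>i::nat. {- real i <..}))" by simp
    show "range (\<lambda>i::nat. {- real i <..}) \<subseteq> range greaterThan" by auto
    show "\<Union> (range (\<lambda>i::nat. {- real i <..})) = space (borel :: real measure)"
    proof -
      have "\<exists>i::nat. - real i < y" for y :: real
        using reals_Archimedean2[of "- y"] by (metis neg_less_iff_less minus_minus)
      then show ?thesis by auto
    qed
  qed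
  also have "{a \<times> b | a b. a \<in> sets HS \<and> b \<in> range greaterThan} = {B \<times> {z<..} | B z. B \<in> sets HS}"
    by auto
  also have "sets (sigma (space HS \<times> space borel) {B \<times> {z<..} | B (z::real). B \<in> sets HS}) =
      sigma_sets (space HS \<times> space borel) {B \<times> {z<..} | B z. B \<in> sets HS}"
    by (rule sets_measure_of) (use sets.sets_into_space in auto)
  finally show ?thesis by (simp add: space_HS)
qed

lemma Int_stable_HSB: "Int_stable {B \<times> {z<..} | B (z::real). B \<in> sets HS}"
  unfolding Int_stable_def
proof (intro ballI)
  fix a b assume "a \<in> {B \<times> {z<..} | B (z::real). B \<in> sets HS}" "b \<in> {B \<times> {z<..} | B (z::real). B \<in> sets HS}"
  then obtain B z B' z' where ab: "a = B \<times> {z<..}" "b = B' \<times> {z'<..}" "B \<in> sets HS" "B' \<in> sets HS"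
    by auto
  have "a \<inter> b = (B \<inter> B') \<times> {max z z'<..}" unfolding ab by auto
  moreover have "B \<inter> B' \<in> sets HS" using ab by auto
  ultimately show "a \<inter> b \<in> {B \<times> {z<..} | B (z::real). B \<in> sets HS}" by blast
qed

context kij begin

definition Hlaw :: "nat \<Rightarrow> (nat \<Rightarrow> real \<times> real) measure" where
  "Hlaw k = distr M HS (Hk k)"
definition Kp :: "nat \<Rightarrow> (nat \<Rightarrow> real \<times> real) \<Rightarrow> ((nat \<Rightarrow> real \<times> real) \<times> real) measure" where
  "Kp k h = distr (kern (vH k h)) (HS \<Otimes>\<^sub>M borel) (Pair h)"
definition Q :: "nat \<Rightarrow> ((nat \<Rightarrow> real \<times> real) \<times> real) measure" where
  "Q k = Hlaw k \<bind> Kp k"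
definition J :: "nat \<Rightarrow> ((nat \<Rightarrow> real \<times> real) \<times> real) measure" where
  "J k = distr M (HS \<Otimes>\<^sub>M borel) (\<lambda>\<omega>. (Hk k \<omega>, X (Suc k) \<omega>))"

lemma kernH_meas[measurable]: "(\<lambda>h. kern (vH k h)) \<in> HS \<rightarrow>\<^sub>M subprob_algebra borel"
  by measurable

lemma Kp_meas[measurable]: "Kp k \<in> HS \<rightarrow>\<^sub>M subprob_algebra (HS \<Otimes>\<^sub>M borel)"
  unfolding Kp_def[abs_def]
  by (rule measurable_distr2[where f=Pair and M=borel]) (simp_all add: kernH_meas measurable_id)

lemma space_Hlaw: "space (Hlaw k) = UNIV"
  by (simp add: Hlaw_def space_HS)

lemma sets_Hlaw[simp]: "sets (Hlaw k) = sets HS" by (simp add: Hlaw_def)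

lemma Kp_meas': "Kp k \<in> Hlaw k \<rightarrow>\<^sub>M subprob_algebra (HS \<Otimes>\<^sub>M borel)"
  by (subst measurable_cong_sets[OF sets_Hlaw refl]) (rule Kp_meas)

lemma Pair_meas: "Pair h \<in> kern v \<rightarrow>\<^sub>M HS \<Otimes>\<^sub>M borel"
proof -
  have "Pair h \<in> borel \<rightarrow>\<^sub>M HS \<Otimes>\<^sub>M borel"
    by (rule measurable_Pair1') (simp add: space_HS)
  moreover have eq: "measurable (kern v) (HS \<Otimes>\<^sub>M borel) = measurable borel (HS \<Otimes>\<^sub>M borel)"
    by (rule measurable_cong_sets) simp_all
  ultimately show ?thesis by (subst eq)
qed

lemma Kp_rect: assumes B: "B \<in> sets HS"
  shows "emeasure (Kp k h) (B \<times> {z<..}) = indicator B h * ennreal (ksurv (vH k h) z)"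
proof -
  have "emeasure (Kp k h) (B \<times> {z<..}) = emeasure (kern (vH k h)) (Pair h -` (B \<times> {z<..}))"
    unfolding Kp_def using B by (subst emeasure_distr[OF Pair_meas]) auto
  also have "\<dots> = indicator B h * ennreal (ksurv (vH k h) z)"
    by (cases "h \<in> B") (auto simp: kern_Ioi)
  finally show ?thesis .
qed

lemma Q_rect: assumes B: "B \<in> sets HS"
  shows "emeasure (Q k) (B \<times> {z<..}) =
    (\<integral>\<^sup>+\<omega>. indicator B (Hk k \<omega>) * ennreal (ksurv (vage A X k \<omega>) z) \<partial>M)"
proof -
  have "emeasure (Q k) (B \<times> {z<..}) = (\<integral>\<^sup>+h. emeasure (Kp k h) (B \<times> {z<..}) \<partial>Hlaw k)"
    unfolding Q_def
    by (rule emeasure_bind[where N="HS \<Otimes>\<^sub>M borel"]) (use B in \<open>auto simp: space_Hlaw Kp_meas'\<close>)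
  also have "\<dots> = (\<integral>\<^sup>+h. indicator B h * ennreal (ksurv (vH k h) z) \<partial>Hlaw k)"
    using B by (simp add: Kp_rect)
  also have "\<dots> = (\<integral>\<^sup>+\<omega>. indicator B (Hk k \<omega>) * ennreal (ksurv (vH k (Hk k \<omega>)) z) \<partial>M)"
    unfolding Hlaw_def using B by (intro nn_integral_distr) auto
  finally show ?thesis by (simp add: vage_eq)
qed

end


context kij begin

lemma Hk_eq: "Hk k \<omega> = (\<lambda>j. (if 1 \<le> j then A j \<omega> else 0, if j \<in> {1..k} then X j \<omega> else 0))"
  by (simp add: Hk_def)

lemma J_rect: assumes B: "B \<in> sets HS"
  shows "emeasure (J k) (B \<times> {z<..}) =
    (\<integral>\<^sup>+\<omega>. indicator B (Hk k \<omega>) * ennreal (ksurv (vage A X k \<omega>) z) \<partial>M)"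
proof -
  define Ss where "Ss = {\<omega> \<in> space M. Hk k \<omega> \<in> B}"
  define Xs where "Xs = {\<omega> \<in> space M. z < X (Suc k) \<omega>}"
  have Ss_sets[measurable]: "Ss \<in> sets M" unfolding Ss_def using B by measurable
  have Xs_sets[measurable]: "Xs \<in> sets M" unfolding Xs_def by measurable
  have pm: "(\<lambda>\<omega>. (Hk k \<omega>, X (Suc k) \<omega>)) \<in> M \<rightarrow>\<^sub>M HS \<Otimes>\<^sub>M borel" by measurable
  have "emeasure (J k) (B \<times> {z<..}) = emeasure M ((\<lambda>\<omega>. (Hk k \<omega>, X (Suc k) \<omega>)) -` (B \<times> {z<..}) \<inter> space M)"
    unfolding J_def using B by (intro emeasure_distr[OF pm]) auto
  also have "(\<lambda>\<omega>. (Hk k \<omega>, X (Suc k) \<omega>)) -` (B \<times> {z<..}) \<inter> space M = Ss \<inter> Xs"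
    unfolding Ss_def Xs_def by auto
  finally have eq1: "emeasure (J k) (B \<times> {z<..}) = emeasure M (Ss \<inter> Xs)" .
  show ?thesis
  proof (cases "0 \<le> z")
    case True
    define cs where "cs \<omega> = cond_surv G (vage A X k \<omega>) z" for \<omega>
    have cs_meas[measurable]: "cs \<in> borel_measurable M" unfolding cs_def by measurable
    have cs_ks: "cs \<omega> = ksurv (vage A X k \<omega>) z" for \<omega>
      using True by (simp add: cs_def ksurv_def)
    have cs_bnd: "0 \<le> cs \<omega>" "cs \<omega> \<le> 1" for \<omega>
      using ksurv_nonneg ksurv_le1 by (simp_all add: cs_ks)
    have kj: "measure M (Ss \<inter> Xs) = (\<integral>\<omega>\<in>Ss. cs \<omega> \<partial>M)"
      using kijima[OF True B, of k] unfolding Ss_def Xs_def cs_def Hk_eq .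
    have int: "integrable M (\<lambda>\<omega>. indicator Ss \<omega> * cs \<omega>)"
      by (rule integrable_const_bound[where B=1]) (auto simp: cs_bnd indicator_def)
    have "emeasure M (Ss \<inter> Xs) = ennreal (measure M (Ss \<inter> Xs))"
      by (simp add: emeasure_eq_measure)
    also have "\<dots> = ennreal (\<integral>\<omega>. indicator Ss \<omega> * cs \<omega> \<partial>M)"
      unfolding kj set_lebesgue_integral_def by simp
    also have "\<dots> = (\<integral>\<^sup>+\<omega>. ennreal (indicator Ss \<omega> * cs \<omega>) \<partial>M)"
      by (rule nn_integral_eq_integral[symmetric, OF int]) (auto simp: cs_bnd)
    also have "\<dots> = (\<integral>\<^sup>+\<omega>. indicator B (Hk k \<omega>) * ennreal (ksurv (vage A X k \<omega>) z) \<partial>M)"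
      by (intro nn_integral_cong) (auto simp: Ss_def cs_ks indicator_def)
    finally show ?thesis using eq1 by simp
  next
    case False
    have "Xs = space M" unfolding Xs_def using False X_nonneg[of "Suc k"] by force
    then have "Ss \<inter> Xs = Ss" unfolding Ss_def by auto
    then have "emeasure (J k) (B \<times> {z<..}) = emeasure M Ss" using eq1 by simp
    also have "\<dots> = (\<integral>\<^sup>+\<omega>. indicator Ss \<omega> \<partial>M)" by simp
    also have "\<dots> = (\<integral>\<^sup>+\<omega>. indicator B (Hk k \<omega>) * ennreal (ksurv (vage A X k \<omega>) z) \<partial>M)"
      using False by (intro nn_integral_cong) (auto simp: Ss_def ksurv_def indicator_def)
    finally show ?thesis .
  qed
qed

lemma J_eq_Q: "J k = Q k"
proof (rule measure_eqI_generator_eq[OF Int_stable_HSB, where \<Omega>="UNIV \<times> UNIV"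
      and A="\<lambda>i. UNIV \<times> {- real i<..}"])
  show "{B \<times> {z<..} | B (z::real). B \<in> sets HS} \<subseteq> Pow (UNIV \<times> UNIV)" by auto
  fix Y assume "Y \<in> {B \<times> {z<..} | B (z::real). B \<in> sets HS}"
  then obtain B z where "Y = B \<times> {z<..}" "B \<in> sets HS" by auto
  then show "emeasure (J k) Y = emeasure (Q k) Y" by (simp add: J_rect Q_rect)
next
  show "sets (J k) = sigma_sets (UNIV \<times> UNIV) {B \<times> {z<..} | B (z::real). B \<in> sets HS}"
    by (simp add: J_def sets_HSB)
  have "sets (Q k) = sets (HS \<Otimes>\<^sub>M borel)"
    unfolding Q_def by (rule sets_bind) (simp_all add: Kp_def space_Hlaw)
  then show "sets (Q k) = sigma_sets (UNIV \<times> UNIV) {B \<times> {z<..} | B (z::real). B \<in> sets HS}"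
    by (simp add: sets_HSB)
  show "range (\<lambda>i. UNIV \<times> {- real i<..}) \<subseteq> {B \<times> {z<..} | B (z::real). B \<in> sets HS}"
    using sets.top[of HS] by (auto simp: space_HS)
  show "(\<Union>i. UNIV \<times> {- real i<..}) = (UNIV \<times> UNIV :: ((nat \<Rightarrow> real \<times> real) \<times> real) set)"
  proof -
    have "\<exists>i::nat. - real i < y" for y :: real
      using reals_Archimedean2[of "- y"] by (metis neg_less_iff_less minus_minus)
    then show ?thesis by auto
  qed
  fix i :: nat
  interpret JP: prob_space "J k" unfolding J_def by (rule prob_space_distr) measurable
  show "emeasure (J k) (UNIV \<times> {- real i<..}) \<noteq> \<infinity>" by (simp add: JP.emeasure_eq_measure)
qed

lemma disint:
  assumes \<Phi>[measurable]: "(\<lambda>(h, x). \<Phi> h x) \<in> borel_measurable (HS \<Otimes>\<^sub>M borel)"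
  shows "(\<integral>\<^sup>+\<omega>. \<Phi> (Hk k \<omega>) (X (Suc k) \<omega>) \<partial>M) =
    (\<integral>\<^sup>+\<omega>. (\<integral>\<^sup>+x. \<Phi> (Hk k \<omega>) x \<partial>kern (vage A X k \<omega>)) \<partial>M)"
proof -
  have pm: "(\<lambda>\<omega>. (Hk k \<omega>, X (Suc k) \<omega>)) \<in> M \<rightarrow>\<^sub>M HS \<Otimes>\<^sub>M borel" by measurable
  have inner_meas: "(\<lambda>h. \<integral>\<^sup>+x. \<Phi> h x \<partial>kern (vH k h)) \<in> borel_measurable HS"
    by (rule nn_integral_measurable_subprob_algebra2[OF \<Phi> kernH_meas])
  have "(\<integral>\<^sup>+\<omega>. \<Phi> (Hk k \<omega>) (X (Suc k) \<omega>) \<partial>M) = (\<integral>\<^sup>+p. (\<lambda>(h, x). \<Phi> h x) p \<partial>J k)"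
    unfolding J_def by (subst nn_integral_distr[OF pm]) auto
  also have "\<dots> = (\<integral>\<^sup>+p. (\<lambda>(h, x). \<Phi> h x) p \<partial>Q k)" by (simp add: J_eq_Q)
  also have "\<dots> = (\<integral>\<^sup>+h. (\<integral>\<^sup>+p. (\<lambda>(h, x). \<Phi> h x) p \<partial>Kp k h) \<partial>Hlaw k)"
    unfolding Q_def by (rule nn_integral_bind[OF \<Phi> Kp_meas'])
  also have "\<dots> = (\<integral>\<^sup>+h. (\<integral>\<^sup>+x. \<Phi> h x \<partial>kern (vH k h)) \<partial>Hlaw k)"
    unfolding Kp_def by (intro nn_integral_cong) (subst nn_integral_distr[OF Pair_meas]; simp)
  also have "\<dots> = (\<integral>\<^sup>+\<omega>. (\<integral>\<^sup>+x. \<Phi> (Hk k \<omega>) x \<partial>kern (vH k (Hk k \<omega>))) \<partial>M)"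
    unfolding Hlaw_def by (rule nn_integral_distr) (simp_all add: inner_meas)
  finally show ?thesis by (simp add: vage_eq)
qed

end


lemma Int_stable_preimages: "Int_stable {f -` S \<inter> space M | S. S \<in> sets N}"
  unfolding Int_stable_def
proof (intro ballI)
  fix a b assume "a \<in> {f -` S \<inter> space M | S. S \<in> sets N}" "b \<in> {f -` S \<inter> space M | S. S \<in> sets N}"
  then obtain S S' where ab: "a = f -` S \<inter> space M" "b = f -` S' \<inter> space M" "S \<in> sets N" "S' \<in> sets N"
    by auto
  then have "a \<inter> b = f -` (S \<inter> S') \<inter> space M" "S \<inter> S' \<in> sets N" by auto
  then show "a \<inter> b \<in> {f -` S \<inter> space M | S. S \<in> sets N}" by blast
qed

lemma proc_meas:
  fixes a x :: "nat \<Rightarrow> 'a \<Rightarrow> real"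
  assumes am: "\<And>j. 1 \<le> j \<Longrightarrow> a j \<in> borel_measurable M"
    and xm: "\<And>j. 1 \<le> j \<Longrightarrow> x j \<in> borel_measurable M"
  shows "(\<lambda>\<omega> j. (if 1 \<le> j then x j \<omega> else 0, if 1 \<le> j then a j \<omega> else 0)) \<in> M \<rightarrow>\<^sub>M HS"
proof (rule measurable_PiM_single')
  fix j :: nat
  have 1: "(\<lambda>\<omega>. if 1 \<le> j then a j \<omega> else 0) \<in> borel_measurable M"
    by (cases "1 \<le> j") (simp_all add: am)
  have 2: "(\<lambda>\<omega>. if 1 \<le> j then x j \<omega> else 0) \<in> borel_measurable M"
    by (cases "1 \<le> j") (simp_all add: xm)
  show "(\<lambda>\<omega>. (if 1 \<le> j then x j \<omega> else 0, if 1 \<le> j then a j \<omega> else 0)) \<in> borel_measurable M"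
    using 2 1 by (rule pair_borel)
qed (intro funcsetI PiE_I; auto)

definition sZ :: "nat \<Rightarrow> (nat \<Rightarrow> real \<times> real) \<Rightarrow> real" where
  "sZ n z = (\<Sum>j\<in>{1..n}. fst (z j))"

lemma sZ_meas[measurable]: "sZ n \<in> HS \<rightarrow>\<^sub>M borel"
  unfolding sZ_def by measurable

definition emb :: "real \<Rightarrow> nat \<Rightarrow> real \<times> real" where "emb t = (\<lambda>_. (t, 0))"

lemma emb_meas[measurable]: "emb \<in> borel \<rightarrow>\<^sub>M HS"
  unfolding emb_def
proof (rule measurable_PiM_single')
  fix i :: nat
  show "(\<lambda>t::real. (t, 0::real)) \<in> borel \<rightarrow>\<^sub>M borel"
    by (rule pair_borel) simp_all
qed (intro funcsetI PiE_I; auto)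

lemma (in prob_space) indep_set_mono1:
  assumes "indep_set A B" "A' \<subseteq> A" shows "indep_set A' B"
  unfolding indep_set_def
proof (rule indep_sets_mono_sets[OF assms(1)[unfolded indep_set_def]])
  fix i :: bool
  show "case_bool A' B i \<subseteq> case_bool A B i" by (cases i) (simp_all add: assms(2))
qed

context kij begin

definition Z :: "'a \<Rightarrow> nat \<Rightarrow> real \<times> real" where
  "Z \<omega> = (\<lambda>k. (if 1 \<le> k then X k \<omega> else 0, if 1 \<le> k then A k \<omega> else 0))"

lemma Z_meas[measurable]: "Z \<in> M \<rightarrow>\<^sub>M HS"
  unfolding Z_def[abs_def] by (rule proc_meas[OF A_meas X_meas])

lemma S_Z: "S n \<omega> = sZ n (Z \<omega>)"
  unfolding S_def sZ_def Z_def by (intro sum.cong) auto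

definition T' :: "'a \<Rightarrow> nat \<Rightarrow> real \<times> real" where "T' \<omega> = emb (T \<omega>)"

lemma T'_meas[measurable]: "T' \<in> M \<rightarrow>\<^sub>M HS"
  unfolding T'_def[abs_def] by measurable

lemma indepTZ: "indep_var HS T' HS Z"
proof -
  have sub: "{T' -` S \<inter> space M | S. S \<in> sets HS} \<subseteq> {T -` S \<inter> space M | S. S \<in> sets (borel :: real measure)}"
  proof safe
    fix S assume S: "S \<in> sets HS"
    have "emb -` S \<inter> space borel \<in> sets borel" using S by (rule measurable_sets[OF emb_meas])
    then have "emb -` S \<in> sets borel" by simp
    moreover have "T' -` S \<inter> space M = T -` (emb -` S) \<inter> space M" by (auto simp: T'_def)
    ultimately show "\<exists>S'. T' -` S \<inter> space M = T -` S' \<inter> space M \<and> S' \<in> sets borel" by blast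
  qed
  have "indep_set {T' -` S \<inter> space M | S. S \<in> sets HS} {Z -` S \<inter> space M | S. S \<in> sets HS}"
    using T_indep unfolding Z_def[abs_def] by (rule indep_set_mono1) (rule sub)
  then have "indep_set (sigma_sets (space M) {T' -` S \<inter> space M | S. S \<in> sets HS})
      (sigma_sets (space M) {Z -` S \<inter> space M | S. S \<in> sets HS})"
    by (intro indep_set_sigma_sets Int_stable_preimages) simp_all
  then show ?thesis
    by (subst indep_var_eq) (simp add: T'_meas Z_meas)
qed

lemma distrTZ: "distr M HS T' \<Otimes>\<^sub>M distr M HS Z = distr M (HS \<Otimes>\<^sub>M HS) (\<lambda>\<omega>. (T' \<omega>, Z \<omega>))"
  using indepTZ by (subst (asm) indep_var_distribution_eq) simp

lemma F_distr: "emeasure (distr M HS T') {a. s \<le> fst (a 0)} = ennreal (F s)"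
proof -
  have "{a. s \<le> fst (a (0::nat))} = {a \<in> space HS. s \<le> fst (a 0)}" by (simp add: space_HS)
  also have "\<dots> \<in> sets HS" by measurable
  finally have "emeasure (distr M HS T') {a. s \<le> fst (a 0)} = emeasure M (T' -` {a. s \<le> fst (a 0)} \<inter> space M)"
    by (intro emeasure_distr) auto
  also have "T' -` {a. s \<le> fst (a 0)} \<inter> space M = {\<omega> \<in> space M. s \<le> T \<omega>}" by (auto simp: T'_def emb_def)
  finally show ?thesis by (simp add: F_def emeasure_eq_measure)
qed

lemma pT: "measure M {\<omega> \<in> space M. S n \<omega> \<le> T \<omega>} = (\<integral>\<omega>. F (S n \<omega>) \<partial>M)"
proof -
  define D where "D = {p :: (nat \<Rightarrow> real \<times> real) \<times> (nat \<Rightarrow> real \<times> real). sZ n (snd p) \<le> fst (fst p 0)}"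
  have "D = {p \<in> space (HS \<Otimes>\<^sub>M HS). sZ n (snd p) \<le> fst (fst p 0)}"
    by (simp add: D_def space_pair_measure space_HS)
  also have "\<dots> \<in> sets (HS \<Otimes>\<^sub>M HS)" by measurable
  finally have D[measurable]: "D \<in> sets (HS \<Otimes>\<^sub>M HS)" .
  have pm: "(\<lambda>\<omega>. (T' \<omega>, Z \<omega>)) \<in> M \<rightarrow>\<^sub>M HS \<Otimes>\<^sub>M HS" by measurable
  interpret LT: prob_space "distr M HS T'" by (rule prob_space_distr) measurable
  interpret LZ: prob_space "distr M HS Z" by (rule prob_space_distr) measurable
  interpret LTZ: pair_prob_space "distr M HS T'" "distr M HS Z" ..
  have "emeasure M {\<omega> \<in> space M. S n \<omega> \<le> T \<omega>} = emeasure M ((\<lambda>\<omega>. (T' \<omega>, Z \<omega>)) -` D \<inter> space M)"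
    unfolding D_def by (intro arg_cong[where f="emeasure M"]) (auto simp: S_Z T'_def emb_def)
  also have "\<dots> = emeasure (distr M (HS \<Otimes>\<^sub>M HS) (\<lambda>\<omega>. (T' \<omega>, Z \<omega>))) D"
    by (rule emeasure_distr[symmetric, OF pm D])
  also have "\<dots> = emeasure (distr M HS T' \<Otimes>\<^sub>M distr M HS Z) D"
    by (simp add: distrTZ)
  also have "\<dots> = (\<integral>\<^sup>+z. emeasure (distr M HS T') ((\<lambda>t. (t, z)) -` D) \<partial>distr M HS Z)"
    by (rule LTZ.emeasure_pair_measure_alt2) simp
  also have "\<dots> = (\<integral>\<^sup>+z. ennreal (F (sZ n z)) \<partial>distr M HS Z)"
    by (intro nn_integral_cong) (simp add: D_def F_distr)
  also have "\<dots> = (\<integral>\<^sup>+\<omega>. ennreal (F (sZ n (Z \<omega>))) \<partial>M)"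
    by (rule nn_integral_distr) simp_all
  finally have e: "emeasure M {\<omega> \<in> space M. S n \<omega> \<le> T \<omega>} = (\<integral>\<^sup>+\<omega>. ennreal (F (S n \<omega>)) \<partial>M)"
    by (simp add: S_Z)
  have "(\<integral>\<omega>. F (S n \<omega>) \<partial>M) = enn2real (\<integral>\<^sup>+\<omega>. ennreal (F (S n \<omega>)) \<partial>M)"
    by (rule integral_eq_nn_integral) (simp_all add: F_nonneg)
  then show ?thesis using e by (simp add: measure_def)
qed

end


context kij begin

declare kern_sets[measurable_cong]

definition PhiN :: "real \<Rightarrow> real \<Rightarrow> ennreal" where
  "PhiN s v = (\<integral>\<^sup>+x. ennreal (F (s + x)) \<partial>kern v)"
definition Phi :: "real \<Rightarrow> real \<Rightarrow> real" where
  "Phi s v = enn2real (PhiN s v)"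

lemma PhiN_le: "PhiN s v \<le> ennreal (F s)"
proof -
  interpret K: prob_space "kern v" by (rule kern_prob)
  have "PhiN s v \<le> (\<integral>\<^sup>+x. ennreal (F s) \<partial>kern v)"
    unfolding PhiN_def
  proof (rule nn_integral_mono_AE)
    show "AE x in kern v. ennreal (F (s + x)) \<le> ennreal (F s)"
      using kern_AE_nonneg[of v] by eventually_elim (intro ennreal_leI F_antimono; simp)
  qed
  also have "\<dots> = ennreal (F s)" using K.emeasure_space_1 by simp
  finally show ?thesis .
qed

lemma PhiN_fin: "PhiN s v \<noteq> \<top>"
  using PhiN_le[of s v] by (metis ennreal_neq_top neq_top_trans)

lemma Phi_eq: "ennreal (Phi s v) = PhiN s v"
  unfolding Phi_def using PhiN_fin by (simp add: ennreal_enn2real_if)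

lemma Phi_nonneg: "0 \<le> Phi s v" by (simp add: Phi_def)

lemma Phi_le: "Phi s v \<le> F s"
  using PhiN_le[of s v] Phi_eq[of s v] F_nonneg[of s] by (metis ennreal_le_iff)

lemma PhiH_meas[measurable]: "(\<lambda>h. Phi (sH n h) (vH n h)) \<in> borel_measurable HS"
proof -
  have "(\<lambda>(h, x). ennreal (F (sH n h + x))) \<in> borel_measurable (HS \<Otimes>\<^sub>M borel)" by measurable
  from nn_integral_measurable_subprob_algebra2[OF this kernH_meas]
  have "(\<lambda>h. PhiN (sH n h) (vH n h)) \<in> borel_measurable HS" unfolding PhiN_def by simp
  then show ?thesis unfolding Phi_def by measurable
qed

abbreviation LT where "LT \<equiv> distr M HS T'"

lemma PhiN_alt: "PhiN s u = (\<integral>\<^sup>+a. ennreal (1 - ksurv u (fst (a 0) - s)) \<partial>LT)"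
proof -
  interpret LTp: prob_space LT by (rule prob_space_distr) measurable
  interpret K: prob_space "kern u" by (rule kern_prob)
  interpret PS: pair_sigma_finite LT "kern u" ..
  define f where "f a x = (indicator {q :: (nat \<Rightarrow> real \<times> real) \<times> real. snd q \<le> fst (fst q 0) - s} (a, x)
    :: ennreal)" for a x
  have fm0: "(\<lambda>q. indicator {q :: (nat \<Rightarrow> real \<times> real) \<times> real. snd q \<le> fst (fst q 0) - s} q :: ennreal)
      \<in> borel_measurable (HS \<Otimes>\<^sub>M borel)"
  proof -
    have "{q :: (nat \<Rightarrow> real \<times> real) \<times> real. snd q \<le> fst (fst q 0) - s} =
        {q \<in> space (HS \<Otimes>\<^sub>M borel). snd q \<le> fst (fst q 0) - s}"
      by (simp add: space_pair_measure space_HS)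
    also have "\<dots> \<in> sets (HS \<Otimes>\<^sub>M borel)" by measurable
    finally show ?thesis by (rule borel_measurable_indicator)
  qed
  have "sets (LT \<Otimes>\<^sub>M kern u) = sets (HS \<Otimes>\<^sub>M borel)"
    by (rule sets_pair_measure_cong) simp_all
  then have fm: "case_prod f \<in> borel_measurable (LT \<Otimes>\<^sub>M kern u)"
    using fm0 unfolding f_def by (subst measurable_cong_sets[of _ "HS \<Otimes>\<^sub>M borel" borel borel]) simp_all
  have i1: "(\<integral>\<^sup>+a. f a x \<partial>LT) = ennreal (F (s + x))" for x
  proof -
    have "{a. s + x \<le> fst (a (0::nat))} = {a \<in> space HS. s + x \<le> fst (a 0)}" by (simp add: space_HS)
    also have "\<dots> \<in> sets HS" by measurable
    finally have st: "{a. s + x \<le> fst (a (0::nat))} \<in> sets LT" by simp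
    have "(\<integral>\<^sup>+a. f a x \<partial>LT) = (\<integral>\<^sup>+a. indicator {a. s + x \<le> fst (a 0)} a \<partial>LT)"
      by (intro nn_integral_cong) (simp add: f_def indicator_def)
    also have "\<dots> = emeasure LT {a. s + x \<le> fst (a 0)}" using st by simp
    finally show ?thesis by (simp add: F_distr)
  qed
  have i2: "(\<integral>\<^sup>+x. f a x \<partial>kern u) = ennreal (1 - ksurv u (fst (a 0) - s))" for a
  proof -
    have "(\<integral>\<^sup>+x. f a x \<partial>kern u) = (\<integral>\<^sup>+x. indicator {..fst (a 0) - s} x \<partial>kern u)"
      by (intro nn_integral_cong) (simp add: f_def indicator_def)
    also have "\<dots> = emeasure (kern u) {..fst (a 0) - s}" by simp
    also have "\<dots> = ennreal (measure (kern u) {..fst (a 0) - s})" by (simp add: K.emeasure_eq_measure)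
    finally show ?thesis by (simp add: kern_measure_atMost)
  qed
  have "PhiN s u = (\<integral>\<^sup>+x. (\<integral>\<^sup>+a. f a x \<partial>LT) \<partial>kern u)"
    unfolding PhiN_def by (simp add: i1)
  also have "\<dots> = (\<integral>\<^sup>+a. (\<integral>\<^sup>+x. f a x \<partial>kern u) \<partial>LT)"
    by (rule PS.Fubini'[OF fm])
  also have "\<dots> = (\<integral>\<^sup>+a. ennreal (1 - ksurv u (fst (a 0) - s)) \<partial>LT)"
    by (simp add: i2)
  finally show ?thesis .
qed

lemma PhiN_mono_v: "0 \<le> v \<Longrightarrow> v \<le> w \<Longrightarrow> PhiN s v \<le> PhiN s w"
  unfolding PhiN_alt
  by (intro nn_integral_mono ennreal_leI) (simp add: ksurv_anti)

lemma Phi_step: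
  assumes "0 \<le> s" "s \<le> s'" "0 \<le> v" "v \<le> v'"
  shows "F s' * Phi s v \<le> F s * Phi s' v'"
proof -
  interpret K: prob_space "kern v'" by (rule kern_prob)
  have "ennreal (F s' * Phi s v) = ennreal (F s') * PhiN s v"
    by (simp add: ennreal_mult F_nonneg Phi_nonneg Phi_eq)
  also have "\<dots> \<le> ennreal (F s') * PhiN s v'"
    using assms by (intro mult_left_mono PhiN_mono_v) auto
  also have "\<dots> = (\<integral>\<^sup>+x. ennreal (F s' * F (s + x)) \<partial>kern v')"
    unfolding PhiN_def by (subst nn_integral_cmult[symmetric]) (simp_all add: ennreal_mult F_nonneg)
  also have "\<dots> \<le> (\<integral>\<^sup>+x. ennreal (F s * F (s' + x)) \<partial>kern v')"
  proof (rule nn_integral_mono_AE)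
    show "AE x in kern v'. ennreal (F s' * F (s + x)) \<le> ennreal (F s * F (s' + x))"
      using kern_AE_nonneg[of v'] proof eventually_elim
      case (elim x)
      have "F (s + x) * F s' \<le> F (s' + x) * F s" using F_DFR[OF assms(1,2) elim] .
      then show ?case by (intro ennreal_leI) (simp add: mult.commute)
    qed
  qed
  also have "\<dots> = ennreal (F s) * PhiN s' v'"
    unfolding PhiN_def by (subst nn_integral_cmult[symmetric]) (simp_all add: ennreal_mult F_nonneg)
  also have "\<dots> = ennreal (F s * Phi s' v')"
    by (simp add: ennreal_mult F_nonneg Phi_nonneg Phi_eq)
  finally show ?thesis
    using F_nonneg Phi_nonneg by (simp add: ennreal_le_iff)
qed

end


lemma (in finite_measure) CS_aux:
  fixes f g :: "'a \<Rightarrow> real"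
  assumes [measurable]: "f \<in> borel_measurable M" "g \<in> borel_measurable M"
    and f: "\<And>\<omega>. \<omega> \<in> space M \<Longrightarrow> 0 \<le> f \<omega> \<and> f \<omega> \<le> 1"
    and g: "\<And>\<omega>. \<omega> \<in> space M \<Longrightarrow> 0 \<le> g \<omega> \<and> g \<omega> \<le> 1"
  shows "(\<integral>\<omega>. f \<omega> * g \<omega> \<partial>M)\<^sup>2 \<le> (\<integral>\<omega>. f \<omega> \<partial>M) * (\<integral>\<omega>. f \<omega> * (g \<omega>)\<^sup>2 \<partial>M)"
proof -
  define a where "a = (\<integral>\<omega>. f \<omega> \<partial>M)"
  define b where "b = (\<integral>\<omega>. f \<omega> * g \<omega> \<partial>M)"
  define c where "c = (\<integral>\<omega>. f \<omega> * (g \<omega>)\<^sup>2 \<partial>M)"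
  have intf: "integrable M f"
    by (rule integrable_const_bound[where B=1]) (auto intro!: AE_I2 dest: f)
  have intfg: "integrable M (\<lambda>\<omega>. f \<omega> * g \<omega>)"
  proof (rule integrable_const_bound[where B=1])
    show "AE x in M. norm (f x * g x) \<le> 1"
    proof (rule AE_I2)
      fix x assume "x \<in> space M"
      then show "norm (f x * g x) \<le> 1" using f[of x] g[of x] by (simp add: mult_le_one abs_mult)
    qed
  qed simp
  have intfgg: "integrable M (\<lambda>\<omega>. f \<omega> * (g \<omega>)\<^sup>2)"
  proof (rule integrable_const_bound[where B=1])
    show "AE x in M. norm (f x * (g x)\<^sup>2) \<le> 1"
    proof (rule AE_I2)
      fix x assume "x \<in> space M"
      then have "0 \<le> f x" "f x \<le> 1" "0 \<le> (g x)\<^sup>2" "(g x)\<^sup>2 \<le> 1" using f[of x] g[of x]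
        by (auto simp: power_le_one)
      then show "norm (f x * (g x)\<^sup>2) \<le> 1" by (simp add: mult_le_one abs_mult)
    qed
  qed simp
  have a0: "0 \<le> a" unfolding a_def by (rule integral_nonneg_AE) (auto intro!: AE_I2 dest: f)
  have b0: "0 \<le> b" unfolding b_def
  proof (rule integral_nonneg_AE, rule AE_I2)
    fix x assume "x \<in> space M"
    then show "0 \<le> f x * g x" using f[of x] g[of x] by simp
  qed
  have ba: "b \<le> a" unfolding a_def b_def
  proof (rule integral_mono[OF intfg intf])
    fix x assume "x \<in> space M"
    then show "f x * g x \<le> f x" using f[of x] g[of x] by (simp add: mult_left_le)
  qed
  have "0 \<le> (\<integral>\<omega>. f \<omega> * (g \<omega> * a - b)\<^sup>2 \<partial>M)"
    by (rule integral_nonneg_AE) (auto intro!: AE_I2 dest: f)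
  also have "(\<integral>\<omega>. f \<omega> * (g \<omega> * a - b)\<^sup>2 \<partial>M) =
      (\<integral>\<omega>. a\<^sup>2 * (f \<omega> * (g \<omega>)\<^sup>2) - 2 * a * b * (f \<omega> * g \<omega>) + b\<^sup>2 * f \<omega> \<partial>M)"
    by (intro Bochner_Integration.integral_cong) (simp_all add: power2_eq_square algebra_simps)
  also have "\<dots> = a\<^sup>2 * c - 2 * a * b * b + b\<^sup>2 * a"
    using intf intfg intfgg unfolding a_def b_def c_def
    by (subst Bochner_Integration.integral_add; (subst Bochner_Integration.integral_diff)?) auto
  finally have "0 \<le> a * (a * c - b\<^sup>2)" by (simp add: power2_eq_square algebra_simps)
  then have "b\<^sup>2 \<le> a * c"
  proof (cases "a = 0")
    case True then have "b = 0" using ba b0 by simp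
    then show ?thesis using True by simp
  next
    case False then have "0 < a" using a0 by simp
    with \<open>0 \<le> a * (a * c - b\<^sup>2)\<close> have "0 \<le> a * c - b\<^sup>2" by (simp add: zero_le_mult_iff)
    then show ?thesis by simp
  qed
  then show ?thesis unfolding a_def b_def c_def .
qed

context kij begin

lemma disint_real:
  assumes \<Phi>m[measurable]: "(\<lambda>(h, x). \<Phi> h x) \<in> borel_measurable (HS \<Otimes>\<^sub>M borel)"
    and b0: "\<And>h x. 0 \<le> \<Phi> h x" and b1: "\<And>h x. \<Phi> h x \<le> 1"
  shows "(\<integral>\<omega>. \<Phi> (Hk k \<omega>) (X (Suc k) \<omega>) \<partial>M) =
    (\<integral>\<omega>. enn2real (\<integral>\<^sup>+x. ennreal (\<Phi> (Hk k \<omega>) x) \<partial>kern (vage A X k \<omega>)) \<partial>M)"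
proof -
  define In where "In h = (\<integral>\<^sup>+x. ennreal (\<Phi> h x) \<partial>kern (vH k h))" for h
  have "(\<lambda>(h, x). ennreal (\<Phi> h x)) \<in> borel_measurable (HS \<Otimes>\<^sub>M borel)" by measurable
  from nn_integral_measurable_subprob_algebra2[OF this kernH_meas]
  have In_m[measurable]: "In \<in> borel_measurable HS" unfolding In_def by simp
  have In_le: "In h \<le> 1" for h
  proof -
    interpret K: prob_space "kern (vH k h)" by (rule kern_prob)
    have "In h \<le> (\<integral>\<^sup>+x. 1 \<partial>kern (vH k h))"
      unfolding In_def by (intro nn_integral_mono) (simp add: b1)
    also have "\<dots> = 1" using K.emeasure_space_1 by simp
    finally show ?thesis .
  qed
  have In_fin: "In h \<noteq> \<top>" for h using In_le[of h] by (metis ennreal_one_neq_top neq_top_trans)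
  have pm: "(\<lambda>\<omega>. (Hk k \<omega>, X (Suc k) \<omega>)) \<in> M \<rightarrow>\<^sub>M HS \<Otimes>\<^sub>M borel" by measurable
  have m1: "(\<lambda>\<omega>. \<Phi> (Hk k \<omega>) (X (Suc k) \<omega>)) \<in> borel_measurable M"
    using measurable_compose[OF pm \<Phi>m] by simp
  have "(\<integral>\<omega>. \<Phi> (Hk k \<omega>) (X (Suc k) \<omega>) \<partial>M) = enn2real (\<integral>\<^sup>+\<omega>. ennreal (\<Phi> (Hk k \<omega>) (X (Suc k) \<omega>)) \<partial>M)"
    by (rule integral_eq_nn_integral[OF m1]) (simp add: b0)
  also have "(\<integral>\<^sup>+\<omega>. ennreal (\<Phi> (Hk k \<omega>) (X (Suc k) \<omega>)) \<partial>M) = (\<integral>\<^sup>+\<omega>. In (Hk k \<omega>) \<partial>M)"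
    unfolding In_def vage_eq[symmetric]
    by (rule disint[where \<Phi>="\<lambda>h x. ennreal (\<Phi> h x)"]) measurable
  also have "\<dots> = (\<integral>\<^sup>+\<omega>. ennreal (enn2real (In (Hk k \<omega>))) \<partial>M)"
    using In_fin by (simp add: ennreal_enn2real_if)
  also have "enn2real \<dots> = (\<integral>\<omega>. enn2real (In (Hk k \<omega>)) \<partial>M)"
    by (rule integral_eq_nn_integral[symmetric]) simp_all
  finally show ?thesis by (simp add: In_def vage_eq)
qed

definition phi :: "nat \<Rightarrow> 'a \<Rightarrow> real" where "phi n \<omega> = Phi (S n \<omega>) (vage A X n \<omega>)"
definition rho :: "nat \<Rightarrow> 'a \<Rightarrow> real" where "rho n \<omega> = phi n \<omega> / F (S n \<omega>)"

lemma phi_H: "phi n \<omega> = Phi (sH n (Hk n \<omega>)) (vH n (Hk n \<omega>))"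
  by (simp add: phi_def S_eq vage_eq)
lemma rho_H: "rho n \<omega> = Phi (sH n (Hk n \<omega>)) (vH n (Hk n \<omega>)) / F (sH n (Hk n \<omega>))"
  by (simp add: rho_def phi_H S_eq)

lemma phi_meas[measurable]: "phi n \<in> borel_measurable M"
  unfolding phi_H[abs_def] by measurable
lemma rho_meas[measurable]: "rho n \<in> borel_measurable M"
  unfolding rho_H[abs_def] by measurable

lemma rho_bnd: "0 \<le> Phi s v / F s" "Phi s v / F s \<le> 1"
  using Phi_le[of s v] Phi_nonneg[of s v] F_nonneg[of s]
  by (auto simp: divide_le_eq_1)

lemma E1: "(\<integral>\<omega>. F (S (Suc n) \<omega>) \<partial>M) = (\<integral>\<omega>. phi n \<omega> \<partial>M)"
proof -
  have "(\<integral>\<omega>. F (sH n (Hk n \<omega>) + X (Suc n) \<omega>) \<partial>M) =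
      (\<integral>\<omega>. enn2real (\<integral>\<^sup>+x. ennreal (F (sH n (Hk n \<omega>) + x)) \<partial>kern (vage A X n \<omega>)) \<partial>M)"
    by (rule disint_real[where \<Phi>="\<lambda>h x. F (sH n h + x)"]) (simp_all add: F_nonneg F_le1)
  then show ?thesis by (simp add: S_Suc S_eq[symmetric] phi_def Phi_def PhiN_def)
qed

lemma E2: "(\<integral>\<omega>. F (S (Suc n) \<omega>) * rho n \<omega> \<partial>M) = (\<integral>\<omega>. phi n \<omega> * rho n \<omega> \<partial>M)"
proof -
  define r where "r h = Phi (sH n h) (vH n h) / F (sH n h)" for h
  have r_meas[measurable]: "r \<in> borel_measurable HS" unfolding r_def by measurable
  have rb: "0 \<le> r h" "r h \<le> 1" for h unfolding r_def by (rule rho_bnd)+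
  have "(\<integral>\<omega>. F (sH n (Hk n \<omega>) + X (Suc n) \<omega>) * r (Hk n \<omega>) \<partial>M) =
      (\<integral>\<omega>. enn2real (\<integral>\<^sup>+x. ennreal (F (sH n (Hk n \<omega>) + x) * r (Hk n \<omega>)) \<partial>kern (vage A X n \<omega>)) \<partial>M)"
    by (rule disint_real[where \<Phi>="\<lambda>h x. F (sH n h + x) * r h"])
       (simp_all add: F_nonneg F_le1 rb mult_le_one)
  also have "\<dots> = (\<integral>\<omega>. phi n \<omega> * rho n \<omega> \<partial>M)"
  proof (intro Bochner_Integration.integral_cong refl)
    fix \<omega>
    have "(\<integral>\<^sup>+x. ennreal (F (sH n (Hk n \<omega>) + x) * r (Hk n \<omega>)) \<partial>kern (vage A X n \<omega>)) =
        ennreal (r (Hk n \<omega>)) * PhiN (S n \<omega>) (vage A X n \<omega>)"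
      unfolding PhiN_def S_eq
      by (subst nn_integral_cmult[symmetric]) (simp_all add: ennreal_mult rb F_nonneg mult.commute)
    also have "\<dots> = ennreal (r (Hk n \<omega>) * phi n \<omega>)"
      by (simp add: phi_def Phi_eq ennreal_mult'' rb Phi_nonneg)
    finally have eq: "(\<integral>\<^sup>+x. ennreal (F (sH n (Hk n \<omega>) + x) * r (Hk n \<omega>)) \<partial>kern (vage A X n \<omega>)) =
        ennreal (r (Hk n \<omega>) * phi n \<omega>)" .
    have rr: "r (Hk n \<omega>) = rho n \<omega>" by (simp add: r_def rho_H)
    have "0 \<le> r (Hk n \<omega>) * phi n \<omega>" using rb[of "Hk n \<omega>"] Phi_nonneg by (simp add: phi_def)
    then show "enn2real (\<integral>\<^sup>+x. ennreal (F (sH n (Hk n \<omega>) + x) * r (Hk n \<omega>)) \<partial>kern (vage A X n \<omega>)) =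
        phi n \<omega> * rho n \<omega>"
      by (subst eq) (simp add: rr mult.commute)
  qed
  finally show ?thesis by (simp add: r_def rho_def phi_def vage_eq[symmetric] S_Suc S_eq[symmetric])
qed

lemma P_pt: "\<omega> \<in> space M \<Longrightarrow> F (S (Suc n) \<omega>) * rho n \<omega> \<le> phi (Suc n) \<omega>"
proof -
  assume w: "\<omega> \<in> space M"
  show ?thesis
  proof (cases "F (S n \<omega>) = 0")
    case True then show ?thesis by (simp add: rho_def phi_def Phi_nonneg)
  next
    case False
    then have Fp: "0 < F (S n \<omega>)" using F_nonneg[of "S n \<omega>"] by simp
    have "F (S (Suc n) \<omega>) * Phi (S n \<omega>) (vage A X n \<omega>) \<le>
        F (S n \<omega>) * Phi (S (Suc n) \<omega>) (vage A X (Suc n) \<omega>)"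
    proof (rule Phi_step)
      show "0 \<le> S n \<omega>" using w by (rule S_nonneg)
      show "S n \<omega> \<le> S (Suc n) \<omega>" using X_nonneg[of "Suc n" \<omega>] w by (simp add: S_Suc)
      show "0 \<le> vage A X n \<omega>" using w by (rule vage_nonneg)
      show "vage A X n \<omega> \<le> vage A X (Suc n) \<omega>" using w by (rule vage_mono)
    qed
    then show ?thesis using Fp
      by (simp add: rho_def phi_def divide_le_eq mult.commute mult.left_commute)
  qed
qed

lemma phi_F_rho: "phi n \<omega> = F (S n \<omega>) * rho n \<omega>"
proof (cases "F (S n \<omega>) = 0")
  case True
  then have "phi n \<omega> = 0" using Phi_le[of "S n \<omega>" "vage A X n \<omega>"] Phi_nonneg[of "S n \<omega>" "vage A X n \<omega>"]
    by (simp add: phi_def)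
  then show ?thesis using True by simp
qed (simp add: rho_def)

lemma S_mono: "\<omega> \<in> space M \<Longrightarrow> k \<le> m \<Longrightarrow> S k \<omega> \<le> S m \<omega>"
  unfolding S_def by (intro sum_mono2) (auto intro: X_nonneg)

lemma Ncount_iff: assumes w: "\<omega> \<in> space M"
  shows "(enat n \<le> Ncount X (T \<omega>) \<omega>) \<longleftrightarrow> S n \<omega> \<le> T \<omega>"
proof
  assume "S n \<omega> \<le> T \<omega>"
  then have "enat n \<in> {enat k | k. (\<Sum>j\<in>{1..k}. X j \<omega>) \<le> T \<omega>}" by (auto simp: S_def)
  then show "enat n \<le> Ncount X (T \<omega>) \<omega>" unfolding Ncount_def by (rule Sup_upper)
next
  assume le: "enat n \<le> Ncount X (T \<omega>) \<omega>"
  show "S n \<omega> \<le> T \<omega>"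
  proof (rule ccontr)
    assume nle: "\<not> S n \<omega> \<le> T \<omega>"
    have n0: "n \<noteq> 0"
    proof
      assume "n = 0"
      then have "S n \<omega> = 0" by (simp add: S_def)
      then show False using nle T_nonneg[OF w] by simp
    qed
    have "Ncount X (T \<omega>) \<omega> \<le> enat (n - 1)"
      unfolding Ncount_def
    proof (rule Sup_least)
      fix y assume "y \<in> {enat k | k. (\<Sum>j\<in>{1..k}. X j \<omega>) \<le> T \<omega>}"
      then obtain k where y: "y = enat k" and k: "S k \<omega> \<le> T \<omega>" by (auto simp: S_def)
      have "k < n"
      proof (rule ccontr)
        assume "\<not> k < n"
        then have "S n \<omega> \<le> S k \<omega>" using w by (intro S_mono) auto
        then show False using k nle by simp
      qed
      then show "y \<le> enat (n - 1)" using y by simp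
    qed
    then have "enat n \<le> enat (n - 1)" using le by (rule order_trans[rotated])
    then show False using n0 by simp
  qed
qed

lemma final: "discrete_DFR M (\<lambda>\<omega>. Ncount X (T \<omega>) \<omega>)"
  unfolding discrete_DFR_def
proof
  fix n :: nat
  have sets_eq: "{\<omega> \<in> space M. Ncount X (T \<omega>) \<omega> \<ge> enat k} = {\<omega> \<in> space M. S k \<omega> \<le> T \<omega>}" for k
    using Ncount_iff by auto
  have p: "measure M {\<omega> \<in> space M. Ncount X (T \<omega>) \<omega> \<ge> enat k} = (\<integral>\<omega>. F (S k \<omega>) \<partial>M)" for k
    unfolding sets_eq by (rule pT)
  have fb: "0 \<le> F (S n \<omega>) \<and> F (S n \<omega>) \<le> 1" for \<omega> by (simp add: F_nonneg F_le1)
  have rb: "0 \<le> rho n \<omega> \<and> rho n \<omega> \<le> 1" for \<omega> unfolding rho_def phi_def using rho_bnd by simp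
  have CS: "(\<integral>\<omega>. F (S n \<omega>) * rho n \<omega> \<partial>M)\<^sup>2 \<le>
      (\<integral>\<omega>. F (S n \<omega>) \<partial>M) * (\<integral>\<omega>. F (S n \<omega>) * (rho n \<omega>)\<^sup>2 \<partial>M)"
    by (rule CS_aux) (simp_all add: fb rb)
  have b: "(\<integral>\<omega>. F (S (Suc n) \<omega>) \<partial>M) = (\<integral>\<omega>. F (S n \<omega>) * rho n \<omega> \<partial>M)"
    by (simp add: E1 phi_F_rho)
  have int1: "integrable M (\<lambda>\<omega>. F (S (Suc n) \<omega>) * rho n \<omega>)"
  proof (rule integrable_const_bound[where B=1])
    show "AE x in M. norm (F (S (Suc n) x) * rho n x) \<le> 1"
      using rb by (intro AE_I2) (simp add: abs_mult mult_le_one F_nonneg F_le1)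
  qed simp
  have int2: "integrable M (phi (Suc n))"
  proof (rule integrable_const_bound[where B=1])
    have "\<bar>Phi s v\<bar> \<le> 1" for s v
      using Phi_le[of s v] Phi_nonneg[of s v] F_le1[of s] by simp
    then show "AE x in M. norm (phi (Suc n) x) \<le> 1"
      by (intro AE_I2) (simp add: phi_def)
  qed simp
  have c: "(\<integral>\<omega>. F (S n \<omega>) * (rho n \<omega>)\<^sup>2 \<partial>M) \<le> (\<integral>\<omega>. F (S (Suc (Suc n)) \<omega>) \<partial>M)"
  proof -
    have "(\<integral>\<omega>. F (S n \<omega>) * (rho n \<omega>)\<^sup>2 \<partial>M) = (\<integral>\<omega>. phi n \<omega> * rho n \<omega> \<partial>M)"
      by (simp add: phi_F_rho power2_eq_square mult.assoc)
    also have "\<dots> = (\<integral>\<omega>. F (S (Suc n) \<omega>) * rho n \<omega> \<partial>M)" by (rule E2[symmetric])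
    also have "\<dots> \<le> (\<integral>\<omega>. phi (Suc n) \<omega> \<partial>M)"
      by (rule integral_mono[OF int1 int2]) (rule P_pt)
    also have "\<dots> = (\<integral>\<omega>. F (S (Suc (Suc n)) \<omega>) \<partial>M)" by (rule E1[symmetric])
    finally show ?thesis .
  qed
  have a0: "0 \<le> (\<integral>\<omega>. F (S n \<omega>) \<partial>M)" by (simp add: F_nonneg)
  show "(measure M {\<omega> \<in> space M. Ncount X (T \<omega>) \<omega> \<ge> enat (n + 1)})\<^sup>2 \<le>
     measure M {\<omega> \<in> space M. Ncount X (T \<omega>) \<omega> \<ge> enat n} *
     measure M {\<omega> \<in> space M. Ncount X (T \<omega>) \<omega> \<ge> enat (n + 2)}"
    unfolding p using CS b c a0
    by (simp add: mult_left_mono order_trans)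
qed

end

theorem proposition4p1:
  fixes M :: "'a measure"
    and A X :: "nat \<Rightarrow> 'a \<Rightarrow> real"
    and T :: "'a \<Rightarrow> real"
    and G :: "real \<Rightarrow> real"
  assumes P: "prob_space M"
    and G_surv: "\<exists>\<mu>. prob_space \<mu> \<and> sets \<mu> = sets borel \<and> emeasure \<mu> {..<0} = 0
                    \<and> (\<forall>t. G t = measure \<mu> {t<..})"
    and A_meas: "\<And>k. 1 \<le> k \<Longrightarrow> A k \<in> borel_measurable M"
    and X_meas: "\<And>k. 1 \<le> k \<Longrightarrow> X k \<in> borel_measurable M"
    and A_nonneg: "\<And>k \<omega>. 1 \<le> k \<Longrightarrow> \<omega> \<in> space M \<Longrightarrow> 0 \<le> A k \<omega>"
    and X_nonneg: "\<And>k \<omega>. 1 \<le> k \<Longrightarrow> \<omega> \<in> space M \<Longrightarrow> 0 \<le> X k \<omega>"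
    and kijima: "\<And>k z B. 0 \<le> z \<Longrightarrow>
        B \<in> sets (PiM UNIV (\<lambda>_. borel :: (real \<times> real) measure)) \<Longrightarrow>
        measure M ({\<omega> \<in> space M.
              (\<lambda>j. (if 1 \<le> j then A j \<omega> else 0, if j \<in> {1..k} then X j \<omega> else 0)) \<in> B}
            \<inter> {\<omega> \<in> space M. X (Suc k) \<omega> > z})
        = (\<integral>\<omega>\<in>{\<omega> \<in> space M.
              (\<lambda>j. (if 1 \<le> j then A j \<omega> else 0, if j \<in> {1..k} then X j \<omega> else 0)) \<in> B}.
              cond_surv G (vage A X k \<omega>) z \<partial>M)"
    and T_meas: "T \<in> borel_measurable M"
    and T_nonneg: "\<And>\<omega>. \<omega> \<in> space M \<Longrightarrow> 0 \<le> T \<omega>"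
    and T_indep: "prob_space.indep_set M
                    {T -` S \<inter> space M | S. S \<in> sets (borel :: real measure)}
                    {(\<lambda>\<omega> k. (if 1 \<le> k then X k \<omega> else 0, if 1 \<le> k then A k \<omega> else 0)) -` S \<inter> space M
                       | S. S \<in> sets (PiM UNIV (\<lambda>_. borel :: (real \<times> real) measure))}"
    and T_DFR: "DFR (surv M T)"
    and G_IFR: "IFR G"
  shows "discrete_DFR M (\<lambda>\<omega>. Ncount X (T \<omega>) \<omega>)"
proof -
  obtain \<mu> where mu: "prob_space \<mu>" "sets \<mu> = sets borel" "\<forall>t. G t = measure \<mu> {t<..}"
    using G_surv by blast
  interpret K: kij M A X T G \<mu>
    apply (rule kij.intro[OF P])
    apply (rule kij_axioms.intro)
    apply (fact mu(1))
    apply (fact mu(2))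
    using mu(3) apply blast
    apply (fact A_meas)
    apply (fact X_meas)
    apply (fact A_nonneg)
    apply (fact X_nonneg)
    apply (fact kijima)
    apply (fact T_meas)
    apply (fact T_nonneg)
    apply (fact T_indep)
    apply (fact T_DFR)
    apply (fact G_IFR)
    done
  show ?thesis by (rule K.final)
qed

end
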